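(* Let $\lambda=(\lambda_1,\dots,\lambda_l)$ and $\mu=(\mu_1,\dots,\mu_m)$ be decompositions of $n$ with $\lambda_l=1$ and $\mu_m\ge 2$, and let $\mu'=(\mu_1,\dots,\mu_{m-1},\mu_m-1,1)$. Then the index of $P_{\lambda|\mu'}$ in $P_{\lambda|\mu}$ is $2^{\mu_m-1}$.
   Context: A decomposition of $N$ is a finite sequence of positive integers with sum $N$. For a decomposition $\lambda=(\lambda_1,\dots,\lambda_l)$ of $N$, $P_\lambda\le\mathrm{GL}_N(\mathbb{F}_2)$ is the standard parabolic subgroup of invertible block upper triangular matrices with diagonal blocks of sizes $\lambda_1,\dots,\lambda_l$ in this order. $P_\mu^t$ is the group of transposes of elements of $P_\mu$, and $P_{\lambda|\mu}=P_\lambda\cap P_\mu^t$. *)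

theory Defs
  imports "HOL-Library.Z2" "Jordan_Normal_Form.Matrix"
begin

definition decomposition :: "nat \<Rightarrow> nat list \<Rightarrow> bool" where
  "decomposition N lam \<longleftrightarrow> (\<forall>x\<in>set lam. 0 < x) \<and> sum_list lam = N"

text \<open>Block index (0-based) of row/column i (0-based) w.r.t. the decomposition lam:
  the number of blocks lying entirely before position i.\<close>
definition blk :: "nat list \<Rightarrow> nat \<Rightarrow> nat" where
  "blk lam i = card {k. k < length lam \<and> sum_list (take (Suc k) lam) \<le> i}"

definition GL2 :: "nat \<Rightarrow> bit mat set" where
  "GL2 N = {A. A \<in> carrier_mat N N \<and> invertible_mat A}"

definition parabolic :: "nat list \<Rightarrow> bit mat set" where
  "parabolic lam = {A \<in> GL2 (sum_list lam).
     \<forall>i < sum_list lam. \<forall>j < sum_list lam. blk lam j < blk lam i \<longrightarrow> A $$ (i, j) = 0}"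

definition parabolic_t :: "nat list \<Rightarrow> bit mat set" where
  "parabolic_t mu = transpose_mat ` parabolic mu"

definition parabolic_int :: "nat list \<Rightarrow> nat list \<Rightarrow> bit mat set" where
  "parabolic_int lam mu = parabolic lam \<inter> parabolic_t mu"

definition subgroup_index :: "bit mat set \<Rightarrow> bit mat set \<Rightarrow> nat" where
  "subgroup_index G H = card ((\<lambda>A. (\<lambda>B. A * B) ` H) ` G)"

end

theory Submission imports Defs "HOL-Library.FuncSet" begin

lemma sum_take_mono: "a \<le> b \<Longrightarrow> sum_list (take a xs) \<le> sum_list (take b (xs::nat list))"
  using take_add[of a "b-a" xs] by simp

lemma sum_butlast: "xs \<noteq> [] \<Longrightarrow> sum_list (xs::nat list) = sum_list (butlast xs) + last xs"
proof -
  assume "xs \<noteq> []"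
  hence "sum_list xs = sum_list (butlast xs @ [last xs])" by simp
  thus ?thesis by simp
qed

lemma blk_last:
  assumes "decomposition n xs" "xs \<noteq> []" "i < n" "n - last xs \<le> i"
  shows "blk xs i = length xs - 1"
proof -
  have s: "sum_list xs = n" using assms(1) unfolding decomposition_def by auto
  have bl: "sum_list (take (length xs - 1) xs) = n - last xs"
    using sum_butlast[OF assms(2)] s by (simp add: butlast_conv_take)
  have "{k. k < length xs \<and> sum_list (take (Suc k) xs) \<le> i} = {..<length xs - 1}"
  proof (intro equalityI subsetI)
    fix k assume "k \<in> {k. k < length xs \<and> sum_list (take (Suc k) xs) \<le> i}"
    hence k: "k < length xs" "sum_list (take (Suc k) xs) \<le> i" by auto
    show "k \<in> {..<length xs - 1}"
    proof (rule ccontr)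
      assume "k \<notin> {..<length xs - 1}"
      hence sk: "Suc k = length xs" using k by auto
      have "take (Suc k) xs = xs" by (metis sk order_refl take_all)
      thus False using k s assms(3) by simp
    qed
  next
    fix k assume "k \<in> {..<length xs - 1}"
    hence k: "Suc k \<le> length xs - 1" "k < length xs" by auto
    have "sum_list (take (Suc k) xs) \<le> i"
      using sum_take_mono[OF k(1), of xs] bl assms(4) by linarith
    thus "k \<in> {k. k < length xs \<and> sum_list (take (Suc k) xs) \<le> i}" using k by auto
  qed
  thus ?thesis unfolding blk_def by simp
qed

lemma blk_lt:
  assumes "decomposition n xs" "xs \<noteq> []" "i < n - last xs"
  shows "blk xs i < length xs - 1"
proof -
  have s: "sum_list xs = n" using assms(1) unfolding decomposition_def by auto
  have bl: "sum_list (take (length xs - 1) xs) = n - last xs"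
    using sum_butlast[OF assms(2)] s by (simp add: butlast_conv_take)
  have len: "length xs \<ge> 2"
  proof (rule ccontr)
    assume "\<not> length xs \<ge> 2"
    moreover have "length xs > 0" using assms(2) by simp
    ultimately have "length xs = 1" by linarith
    hence "n - last xs = 0" using bl by simp
    thus False using assms(3) by simp
  qed
  have i: "i < n" using assms(3) by simp
  have "{k. k < length xs \<and> sum_list (take (Suc k) xs) \<le> i} \<subseteq> {..<length xs - 1} - {length xs - 2}"
  proof
    fix k assume "k \<in> {k. k < length xs \<and> sum_list (take (Suc k) xs) \<le> i}"
    hence k: "k < length xs" "sum_list (take (Suc k) xs) \<le> i" by auto
    have "Suc k \<noteq> length xs"
    proof
      assume sk: "Suc k = length xs"
      have "take (Suc k) xs = xs" by (metis sk order_refl take_all)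
      thus False using k s i by simp
    qed
    moreover have "Suc k \<noteq> length xs - 1"
    proof
      assume "Suc k = length xs - 1"
      hence "sum_list (take (Suc k) xs) = n - last xs" using bl by simp
      thus False using k(2) assms(3) by simp
    qed
    ultimately have "k < length xs - 1" "k \<noteq> length xs - 2" using k len by arith+
    thus "k \<in> {..<length xs - 1} - {length xs - 2}" by simp
  qed
  hence "blk xs i \<le> card ({..<length xs - 1} - {length xs - 2})"
    unfolding blk_def by (intro card_mono) auto
  also have "\<dots> = length xs - 2" using len by simp
  finally show ?thesis using len by simp
qed

lemma blk_le:
  assumes "decomposition n xs" "xs \<noteq> []" "i < n"
  shows "blk xs i \<le> length xs - 1"
proof (cases "n - last xs \<le> i")
  case True thus ?thesis using blk_last[OF assms] by simp
next
  case False thus ?thesis using blk_lt[OF assms(1,2), of i] by simp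
qed


lemma decomp_split:
  assumes "decomposition n mu" "mu \<noteq> []" "last mu \<ge> 2"
  shows "decomposition n (butlast mu @ [last mu - 1, 1])"
proof -
  have s: "sum_list mu = n" and p: "\<forall>x\<in>set mu. 0 < x" using assms(1) unfolding decomposition_def by auto
  have "sum_list (butlast mu @ [last mu - 1, 1]) = sum_list (butlast mu) + last mu" using assms(3) by simp
  also have "\<dots> = n" using sum_butlast[OF assms(2)] s by simp
  finally show ?thesis unfolding decomposition_def using p assms(3) by (auto dest: in_set_butlastD)
qed

lemma blk_split:
  assumes "decomposition n mu" "mu \<noteq> []" "last mu \<ge> 2" "i < n - 1"
  shows "blk (butlast mu @ [last mu - 1, 1]) i = blk mu i"
proof -
  define m where "m = length mu"
  define mu' where "mu' = butlast mu @ [last mu - 1, 1]"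
  have s: "sum_list mu = n" using assms(1) unfolding decomposition_def by auto
  have sb: "sum_list (butlast mu) + last mu = n" using sum_butlast[OF assms(2)] s by simp
  have m1: "m \<ge> 1" using assms(2) unfolding m_def by (cases mu) auto
  have lb: "length (butlast mu) = m - 1" unfolding m_def by simp
  have lm': "length mu' = m + 1" unfolding mu'_def using m1 lb by simp
  have A: "take (Suc k) mu' = take (Suc k) mu" if "k < m - 1" for k
  proof -
    have "take (Suc k) mu' = take (Suc k) (butlast mu)" unfolding mu'_def using that lb by simp
    also have "\<dots> = take (Suc k) mu" using that unfolding m_def by (simp add: take_butlast)
    finally show ?thesis .
  qed
  have tm: "take m mu' = butlast mu @ [last mu - 1]" unfolding mu'_def using lb m1
    by (simp add: take_append)
  have B: "sum_list (take (Suc k) mu') > i" if "k \<ge> m - 1" for k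
  proof -
    have "sum_list (take m mu') \<le> sum_list (take (Suc k) mu')"
      using that m1 by (intro sum_take_mono) simp
    moreover have "sum_list (take m mu') = n - 1" using tm sb assms(3) by simp
    ultimately show ?thesis using assms(4) by simp
  qed
  have C: "sum_list (take (Suc k) mu) > i" if "k \<ge> m - 1" for k
  proof -
    have "take (Suc k) mu = mu" using that m1 unfolding m_def by simp
    thus ?thesis using s assms(4) by simp
  qed
  have "{k. k < length mu' \<and> sum_list (take (Suc k) mu') \<le> i} = {k. k < m - 1 \<and> sum_list (take (Suc k) mu) \<le> i}"
  proof (intro equalityI subsetI)
    fix k assume "k \<in> {k. k < length mu' \<and> sum_list (take (Suc k) mu') \<le> i}"
    hence k: "sum_list (take (Suc k) mu') \<le> i" by auto
    have "k < m - 1" using B[of k] k by (cases "k < m - 1") auto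
    thus "k \<in> {k. k < m - 1 \<and> sum_list (take (Suc k) mu) \<le> i}" using A[of k] k by auto
  next
    fix k assume "k \<in> {k. k < m - 1 \<and> sum_list (take (Suc k) mu) \<le> i}"
    thus "k \<in> {k. k < length mu' \<and> sum_list (take (Suc k) mu') \<le> i}" using A[of k] lm' by auto
  qed
  moreover have "{k. k < length mu \<and> sum_list (take (Suc k) mu) \<le> i} = {k. k < m - 1 \<and> sum_list (take (Suc k) mu) \<le> i}"
  proof (intro equalityI subsetI)
    fix k assume "k \<in> {k. k < length mu \<and> sum_list (take (Suc k) mu) \<le> i}"
    hence k: "sum_list (take (Suc k) mu) \<le> i" by auto
    have "k < m - 1" using C[of k] k by (cases "k < m - 1") auto
    thus "k \<in> {k. k < m - 1 \<and> sum_list (take (Suc k) mu) \<le> i}" using k by auto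
  next
    fix k assume "k \<in> {k. k < m - 1 \<and> sum_list (take (Suc k) mu) \<le> i}"
    thus "k \<in> {k. k < length mu \<and> sum_list (take (Suc k) mu) \<le> i}" unfolding m_def by auto
  qed
  ultimately show ?thesis unfolding blk_def mu'_def by simp
qed


lemma bit_UNIV: "(UNIV :: bit set) = {0, 1}"
  using bit_not_zero_iff by auto

lemma card_bit: "card (UNIV :: bit set) = 2"
  unfolding bit_UNIV by simp

lemma bit_add_self: "(x::bit) + x = 0"
  by (cases "x = 0") (simp_all add: bit_not_zero_iff)

lemma mult_entry:
  assumes "A \<in> carrier_mat n n" "B \<in> carrier_mat n n" "i < n" "j < n"
  shows "(A * B) $$ (i,j) = (\<Sum>k\<in>{0..<n}. A $$ (i,k) * B $$ (k,j))"
  using assms by (simp add: scalar_prod_def)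

lemma invertibleI:
  assumes "A \<in> carrier_mat n n" "B \<in> carrier_mat n n" "A * B = 1\<^sub>m n" "B * A = 1\<^sub>m n"
  shows "invertible_mat A"
  using assms unfolding invertible_mat_def inverts_mat_def square_mat.simps by auto

lemma invertibleD:
  assumes "A \<in> carrier_mat n n" "invertible_mat A"
  shows "\<exists>B \<in> carrier_mat n n. A * B = 1\<^sub>m n \<and> B * A = 1\<^sub>m n"
proof -
  obtain B where AB: "A * B = 1\<^sub>m (dim_row A)" and BA: "B * A = 1\<^sub>m (dim_row B)"
    using assms(2) unfolding invertible_mat_def inverts_mat_def by auto
  have "dim_col B = n" using arg_cong[OF AB, of dim_col] assms(1) by simp
  moreover have "dim_row B = n" using arg_cong[OF BA, of dim_col] assms(1) by simp
  ultimately show ?thesis using AB BA assms(1) by (intro bexI[of _ B]) auto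
qed

lemma invertible_transpose:
  assumes "(A :: 'a :: comm_semiring_1 mat) \<in> carrier_mat n n" "invertible_mat A"
  shows "invertible_mat (transpose_mat A)"
proof -
  obtain B where B: "B \<in> carrier_mat n n" "A * B = 1\<^sub>m n" "B * A = 1\<^sub>m n"
    using invertibleD[OF assms] by auto
  have "transpose_mat A * transpose_mat B = 1\<^sub>m n"
    using transpose_mult[OF B(1) assms(1)] B(3) by simp
  moreover have "transpose_mat B * transpose_mat A = 1\<^sub>m n"
    using transpose_mult[OF assms(1) B(1)] B(2) by simp
  ultimately show ?thesis using assms(1) B(1) by (intro invertibleI[of _ n "transpose_mat B"]) auto
qed

definition PP :: "nat \<Rightarrow> nat list \<Rightarrow> nat list \<Rightarrow> bit mat set" where
  "PP n lam mu = {A \<in> carrier_mat n n. invertible_mat A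
     \<and> (\<forall>i<n. \<forall>j<n. blk lam j < blk lam i \<longrightarrow> A $$ (i,j) = 0)
     \<and> (\<forall>i<n. \<forall>j<n. blk mu i < blk mu j \<longrightarrow> A $$ (i,j) = 0)}"

lemma PI:
  assumes "sum_list lam = n" "sum_list mu = n"
  shows "parabolic_int lam mu = PP n lam mu"
proof (intro equalityI subsetI)
  fix A assume "A \<in> parabolic_int lam mu"
  then obtain B where A1: "A \<in> carrier_mat n n" "invertible_mat A"
      "\<forall>i<n. \<forall>j<n. blk lam j < blk lam i \<longrightarrow> A $$ (i,j) = 0"
    and AB: "A = transpose_mat B" and B1: "B \<in> carrier_mat n n"
      "\<forall>i<n. \<forall>j<n. blk mu j < blk mu i \<longrightarrow> B $$ (i,j) = 0"
    unfolding parabolic_int_def parabolic_t_def parabolic_def GL2_def using assms by auto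
  have "\<forall>i<n. \<forall>j<n. blk mu i < blk mu j \<longrightarrow> A $$ (i,j) = 0"
    using B1 AB by auto
  thus "A \<in> PP n lam mu" using A1 unfolding PP_def by auto
next
  fix A assume "A \<in> PP n lam mu"
  hence A1: "A \<in> carrier_mat n n" "invertible_mat A"
      "\<forall>i<n. \<forall>j<n. blk lam j < blk lam i \<longrightarrow> A $$ (i,j) = 0"
      "\<forall>i<n. \<forall>j<n. blk mu i < blk mu j \<longrightarrow> A $$ (i,j) = 0"
    unfolding PP_def by auto
  have "transpose_mat A \<in> parabolic mu"
    unfolding parabolic_def GL2_def using assms A1 invertible_transpose[OF A1(1,2)] by auto
  hence "A \<in> parabolic_t mu" unfolding parabolic_t_def
    by (metis image_eqI transpose_transpose)
  moreover have "A \<in> parabolic lam" unfolding parabolic_def GL2_def using assms A1 by auto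
  ultimately show "A \<in> parabolic_int lam mu" unfolding parabolic_int_def by auto
qed

lemma PP_one: "1\<^sub>m n \<in> PP n lam mu"
  unfolding PP_def using invertibleI[of "1\<^sub>m n" n "1\<^sub>m n"] by auto

lemma PP_mult:
  assumes "A \<in> PP n lam mu" "B \<in> PP n lam mu"
  shows "A * B \<in> PP n lam mu"
proof -
  have A: "A \<in> carrier_mat n n" "invertible_mat A"
      "\<And>i j. i<n \<Longrightarrow> j<n \<Longrightarrow> blk lam j < blk lam i \<Longrightarrow> A $$ (i,j) = 0"
      "\<And>i j. i<n \<Longrightarrow> j<n \<Longrightarrow> blk mu i < blk mu j \<Longrightarrow> A $$ (i,j) = 0"
    using assms(1) unfolding PP_def by auto
  have B: "B \<in> carrier_mat n n" "invertible_mat B"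
      "\<And>i j. i<n \<Longrightarrow> j<n \<Longrightarrow> blk lam j < blk lam i \<Longrightarrow> B $$ (i,j) = 0"
      "\<And>i j. i<n \<Longrightarrow> j<n \<Longrightarrow> blk mu i < blk mu j \<Longrightarrow> B $$ (i,j) = 0"
    using assms(2) unfolding PP_def by auto
  obtain A' where A': "A' \<in> carrier_mat n n" "A * A' = 1\<^sub>m n" "A' * A = 1\<^sub>m n"
    using invertibleD[OF A(1,2)] by auto
  obtain B' where B': "B' \<in> carrier_mat n n" "B * B' = 1\<^sub>m n" "B' * B = 1\<^sub>m n"
    using invertibleD[OF B(1,2)] by auto
  have "(A * B) * (B' * A') = A * ((B * B') * A')"
    using A(1) B(1) A'(1) B'(1) by (simp add: assoc_mult_mat[of _ n n _ n _ n])
  also have "\<dots> = 1\<^sub>m n" using B'(2) A'(1,2) by simp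
  finally have 1: "(A * B) * (B' * A') = 1\<^sub>m n" .
  have "(B' * A') * (A * B) = B' * ((A' * A) * B)"
    using A(1) B(1) A'(1) B'(1) by (simp add: assoc_mult_mat[of _ n n _ n _ n])
  also have "\<dots> = 1\<^sub>m n" using A'(3) B(1) B'(3) by simp
  finally have 2: "(B' * A') * (A * B) = 1\<^sub>m n" .
  have inv: "invertible_mat (A * B)"
    using invertibleI[OF _ _ 1 2] A(1) B(1) A'(1) B'(1) by auto
  have c1: "(A * B) $$ (i,j) = 0" if "i<n" "j<n" "blk lam j < blk lam i" for i j
  proof -
    have "(A * B) $$ (i,j) = (\<Sum>k\<in>{0..<n}. A $$ (i,k) * B $$ (k,j))"
      using mult_entry[OF A(1) B(1) that(1,2)] .
    also have "\<dots> = 0"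
    proof (rule sum.neutral, rule ballI)
      fix k assume "k \<in> {0..<n}"
      hence k: "k < n" by simp
      show "A $$ (i,k) * B $$ (k,j) = 0"
      proof (cases "blk lam k < blk lam i")
        case True thus ?thesis using A(3)[OF that(1) k] by simp
      next
        case False thus ?thesis using B(3)[OF k that(2)] that(3) by simp
      qed
    qed
    finally show ?thesis .
  qed
  have c2: "(A * B) $$ (i,j) = 0" if "i<n" "j<n" "blk mu i < blk mu j" for i j
  proof -
    have "(A * B) $$ (i,j) = (\<Sum>k\<in>{0..<n}. A $$ (i,k) * B $$ (k,j))"
      using mult_entry[OF A(1) B(1) that(1,2)] .
    also have "\<dots> = 0"
    proof (rule sum.neutral, rule ballI)
      fix k assume "k \<in> {0..<n}"
      hence k: "k < n" by simp
      show "A $$ (i,k) * B $$ (k,j) = 0"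
      proof (cases "blk mu i < blk mu k")
        case True thus ?thesis using A(4)[OF that(1) k] by simp
      next
        case False thus ?thesis using B(4)[OF k that(2)] that(3) by simp
      qed
    qed
    finally show ?thesis .
  qed
  show ?thesis unfolding PP_def using inv c1 c2 A(1) B(1) by auto
qed

lemma finite_carrier_bit: "finite (carrier_mat n n :: bit mat set)"
proof -
  have "carrier_mat n n \<subseteq> (\<lambda>f. mat n n f) ` (({..<n} \<times> {..<n}) \<rightarrow>\<^sub>E (UNIV :: bit set))"
  proof
    fix A :: "bit mat" assume A: "A \<in> carrier_mat n n"
    have "A = mat n n (restrict (\<lambda>p. A $$ p) ({..<n} \<times> {..<n}))"
      using A by (intro eq_matI) auto
    moreover have "restrict (\<lambda>p. A $$ p) ({..<n} \<times> {..<n}) \<in> ({..<n} \<times> {..<n}) \<rightarrow>\<^sub>E (UNIV :: bit set)"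
      by simp
    ultimately show "A \<in> (\<lambda>f. mat n n f) ` (({..<n} \<times> {..<n}) \<rightarrow>\<^sub>E (UNIV :: bit set))" by blast
  qed
  moreover have "finite (({..<n} \<times> {..<n}) \<rightarrow>\<^sub>E (UNIV :: bit set))"
    by (intro finite_PiE) (auto simp: bit_UNIV)
  ultimately show ?thesis using finite_subset by blast
qed

primrec pw :: "nat \<Rightarrow> bit mat \<Rightarrow> nat \<Rightarrow> bit mat" where
  "pw n A 0 = 1\<^sub>m n"
| "pw n A (Suc k) = A * pw n A k"

lemma PP_inv:
  assumes "A \<in> PP n lam mu"
  shows "\<exists>C \<in> PP n lam mu. A * C = 1\<^sub>m n \<and> C * A = 1\<^sub>m n"
proof -
  have A: "A \<in> carrier_mat n n" "invertible_mat A" using assms unfolding PP_def by auto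
  obtain B where B: "B \<in> carrier_mat n n" "A * B = 1\<^sub>m n" "B * A = 1\<^sub>m n"
    using invertibleD[OF A] by auto
  have pwP: "pw n A k \<in> PP n lam mu" for k
    by (induction k) (auto intro: PP_one PP_mult assms)
  have pwC: "pw n A k \<in> carrier_mat n n" for k
    using pwP[of k] unfolding PP_def by auto
  have "finite (range (pw n A))"
    using finite_subset[OF _ finite_carrier_bit[of n]] pwC by blast
  hence "\<not> inj (pw n A)" using finite_imageD by blast
  then obtain i j where ij: "i \<noteq> j" "pw n A i = pw n A j" unfolding inj_def by blast
  obtain i d where id: "pw n A i = pw n A (i + Suc d)"
  proof (cases "i < j")
    case True thus ?thesis using that[of i "j - i - 1"] ij by simp
  next
    case False thus ?thesis using that[of j "i - j - 1"] ij by simp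
  qed
  have canc: "pw n A i = pw n A (i + Suc d) \<Longrightarrow> pw n A 0 = pw n A (Suc d)" for i
  proof (induction i)
    case 0 thus ?case by simp
  next
    case (Suc i)
    have h: "B * pw n A (Suc k) = pw n A k" for k
    proof -
      have "B * (A * pw n A k) = (B * A) * pw n A k"
        using B(1) A(1) pwC[of k] by (simp add: assoc_mult_mat[of _ n n _ n _ n])
      thus ?thesis using B(3) pwC[of k] by simp
    qed
    have "pw n A i = B * pw n A (Suc i)" using h[of i] by (rule sym)
    also have "\<dots> = B * pw n A (Suc (i + Suc d))" using Suc.prems by (simp only: add_Suc)
    also have "\<dots> = pw n A (i + Suc d)" by (rule h)
    finally have "pw n A i = pw n A (i + Suc d)" .
    thus ?case using Suc.IH by simp
  qed
  have AC: "A * pw n A d = 1\<^sub>m n" using canc[OF id] by simp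
  have "B = B * (A * pw n A d)" using AC B(1) by simp
  also have "\<dots> = (B * A) * pw n A d"
    using B(1) A(1) pwC[of d] by (simp add: assoc_mult_mat[of _ n n _ n _ n])
  also have "\<dots> = pw n A d" using B(3) pwC[of d] by simp
  finally have "pw n A d * A = 1\<^sub>m n" using B(3) by simp
  thus ?thesis using AC pwP[of d] by blast
qed


lemma mult_unit_vec:
  fixes A :: "bit mat"
  assumes "A \<in> carrier_mat n n" "j < n"
  shows "A *\<^sub>v unit_vec n j = col A j"
proof -
  have "col (A * 1\<^sub>m n) j = A *\<^sub>v col (1\<^sub>m n) j" using assms by (intro col_mult2) auto
  moreover have "A * 1\<^sub>m n = A" using assms(1) by (metis carrier_matD(2) right_mult_one_mat')
  ultimately show ?thesis using assms(2) by simp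
qed

theorem corollary2:
  fixes n :: nat and lam mu :: "nat list"
  assumes "decomposition n lam" and "decomposition n mu"
    and "lam \<noteq> []" and "last lam = 1"
    and "mu \<noteq> []" and "last mu \<ge> 2"
  shows "parabolic_int lam (butlast mu @ [last mu - 1, 1]) \<subseteq> parabolic_int lam mu
       \<and> subgroup_index (parabolic_int lam mu) (parabolic_int lam (butlast mu @ [last mu - 1, 1]))
           = 2 ^ (last mu - 1)"
proof -
  define a where "a = last mu"
  define mu' where "mu' = butlast mu @ [last mu - 1, 1]"
  define l where "l = length lam"
  define m where "m = length mu"
  have sl: "sum_list lam = n" and smu: "sum_list mu = n"
    using assms(1,2) unfolding decomposition_def by auto
  have dmu': "decomposition n mu'" using decomp_split[OF assms(2,5,6)] unfolding mu'_def .
  have smu': "sum_list mu' = n" using dmu' unfolding decomposition_def by auto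
  have na: "n = sum_list (butlast mu) + a" using sum_butlast[OF assms(5)] smu unfolding a_def by simp
  have a2: "a \<ge> 2" using assms(6) unfolding a_def .
  have n2: "n \<ge> 2" using na a2 by simp
  have an: "a \<le> n" using na by simp
  have m1: "m \<ge> 1" using assms(5) unfolding m_def by (cases mu) auto
  have mu'ne: "mu' \<noteq> []" and lmu': "last mu' = 1" unfolding mu'_def by auto
  have len': "length mu' = m + 1" unfolding mu'_def m_def using m1 m_def by simp
  have bl_last: "blk lam (n-1) = l - 1"
    using blk_last[OF assms(1,3), of "n-1"] assms(4) n2 unfolding l_def by simp
  have bl_lt: "blk lam j < l - 1" if "j < n - 1" for j
    using blk_lt[OF assms(1,3), of j] assms(4) that unfolding l_def by simp
  have bl_le: "blk lam i \<le> l - 1" if "i < n" for i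
    using blk_le[OF assms(1,3) that] unfolding l_def by simp
  have bm_last: "blk mu (n-1) = m - 1"
    using blk_last[OF assms(2,5), of "n-1"] a2 n2 unfolding m_def a_def by simp
  have bm_le: "blk mu i \<le> m - 1" if "i < n" for i
    using blk_le[OF assms(2,5) that] unfolding m_def by simp
  have bm_iff: "blk mu i < blk mu (n-1) \<longleftrightarrow> i < n - a" if "i < n" for i
  proof (cases "n - a \<le> i")
    case True thus ?thesis using blk_last[OF assms(2,5) that] bm_last unfolding m_def a_def by simp
  next
    case False thus ?thesis using blk_lt[OF assms(2,5), of i] bm_last unfolding m_def a_def by simp
  qed
  have bm'_last: "blk mu' (n-1) = m"
    using blk_last[OF dmu' mu'ne, of "n-1"] lmu' len' n2 by simp
  have bm'_eq: "blk mu' i = blk mu i" if "i < n - 1" for i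
    using blk_split[OF assms(2,5,6) that] unfolding mu'_def .
  define P where "P = PP n lam mu"
  define P' where "P' = PP n lam mu'"
  have PIa: "parabolic_int lam mu = P" unfolding P_def using PI[OF sl smu] .
  have PIb: "parabolic_int lam mu' = P'" unfolding P'_def using PI[OF sl smu'] .
  have P'char: "P' = {A \<in> P. \<forall>i<n-1. A $$ (i,n-1) = 0}"
  proof (intro equalityI subsetI)
    fix A assume "A \<in> P'"
    hence A: "A \<in> carrier_mat n n" "invertible_mat A"
      "\<And>i j. i<n \<Longrightarrow> j<n \<Longrightarrow> blk lam j < blk lam i \<Longrightarrow> A $$ (i,j) = 0"
      "\<And>i j. i<n \<Longrightarrow> j<n \<Longrightarrow> blk mu' i < blk mu' j \<Longrightarrow> A $$ (i,j) = 0"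
      unfolding P'_def PP_def by auto
    have c: "A $$ (i,j) = 0" if "i<n" "j<n" "blk mu i < blk mu j" for i j
    proof -
      have "blk mu' i < blk mu' j"
      proof (cases "i = n - 1")
        case True thus ?thesis using that bm_last bm_le[of j] by simp
      next
        case False
        hence i: "i < n - 1" using that by simp
        show ?thesis
        proof (cases "j = n - 1")
          case True thus ?thesis using bm'_eq[OF i] bm_le[of i] that bm'_last m1 by simp
        next
          case False thus ?thesis using bm'_eq[OF i] bm'_eq[of j] that by simp
        qed
      qed
      thus ?thesis using A(4) that by simp
    qed
    have z: "\<forall>i<n-1. A $$ (i,n-1) = 0"
    proof (intro allI impI)
      fix i assume i: "i < n - 1"
      have "i < n" using i by simp
      hence "blk mu' i < blk mu' (n-1)" using bm'_eq[OF i] bm_le[of i] bm'_last m1 by simp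
      thus "A $$ (i,n-1) = 0" using A(4)[of i "n-1"] i n2 by simp
    qed
    have "A \<in> P" unfolding P_def PP_def using A(1,2,3) c by auto
    thus "A \<in> {A \<in> P. \<forall>i<n-1. A $$ (i,n-1) = 0}" using z by simp
  next
    fix A assume "A \<in> {A \<in> P. \<forall>i<n-1. A $$ (i,n-1) = 0}"
    hence A: "A \<in> carrier_mat n n" "invertible_mat A"
      "\<And>i j. i<n \<Longrightarrow> j<n \<Longrightarrow> blk lam j < blk lam i \<Longrightarrow> A $$ (i,j) = 0"
      "\<And>i j. i<n \<Longrightarrow> j<n \<Longrightarrow> blk mu i < blk mu j \<Longrightarrow> A $$ (i,j) = 0"
      and z: "\<And>i. i < n - 1 \<Longrightarrow> A $$ (i,n-1) = 0"
      unfolding P_def PP_def by auto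
    have c: "A $$ (i,j) = 0" if "i<n" "j<n" "blk mu' i < blk mu' j" for i j
    proof (cases "j = n - 1")
      case True
      hence "i \<noteq> n - 1" using that by auto
      hence "i < n - 1" using that by simp
      thus ?thesis using z True by simp
    next
      case False
      hence j: "j < n - 1" using that by simp
      show ?thesis
      proof (cases "i = n - 1")
        case True thus ?thesis using that bm'_last bm'_eq[OF j] bm_le[of j] by simp
      next
        case False
        hence "i < n - 1" using that by simp
        thus ?thesis using A(4)[OF that(1,2)] bm'_eq[OF j] bm'_eq[of i] that by simp
      qed
    qed
    show "A \<in> P'" unfolding P'_def PP_def using A(1,2,3) c by auto
  qed
  have sub: "P' \<subseteq> P" using P'char by auto
  define g where "g A = col A (n-1)" for A :: "bit mat"
  have Pc: "A \<in> carrier_mat n n" if "A \<in> P" for A using that unfolding P_def PP_def by auto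
  have diag: "A $$ (n-1,n-1) = 1" if "A \<in> P" for A
  proof -
    have A: "A \<in> carrier_mat n n" "invertible_mat A"
      "\<And>i j. i<n \<Longrightarrow> j<n \<Longrightarrow> blk lam j < blk lam i \<Longrightarrow> A $$ (i,j) = 0"
      using that unfolding P_def PP_def by auto
    obtain B where B: "B \<in> carrier_mat n n" "A * B = 1\<^sub>m n"
      using invertibleD[OF A(1,2)] by auto
    have "1 = (A * B) $$ (n-1,n-1)" using B(2) n2 by simp
    also have "\<dots> = (\<Sum>k\<in>{0..<n}. A $$ (n-1,k) * B $$ (k,n-1))"
      using mult_entry[OF A(1) B(1)] n2 by simp
    also have "\<dots> = (\<Sum>k\<in>{0..<n}. if k = n-1 then A $$ (n-1,n-1) * B $$ (n-1,n-1) else 0)"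
    proof (rule sum.cong)
      fix k assume "k \<in> {0..<n}"
      hence k: "k < n" by simp
      show "A $$ (n-1,k) * B $$ (k,n-1) = (if k = n-1 then A $$ (n-1,n-1) * B $$ (n-1,n-1) else 0)"
      proof (cases "k = n - 1")
        case False
        hence "k < n - 1" using k by simp
        hence "A $$ (n-1,k) = 0" using A(3)[of "n-1" k] bl_lt[of k] bl_last k n2 by simp
        thus ?thesis using False by simp
      qed simp
    qed simp
    also have "\<dots> = A $$ (n-1,n-1) * B $$ (n-1,n-1)" using n2 by simp
    finally have "A $$ (n-1,n-1) \<noteq> 0" by auto
    thus ?thesis by simp
  qed
  have gP': "g B = unit_vec n (n-1)" if "B \<in> P'" for B
  proof -
    have B: "B \<in> P" "\<And>i. i < n - 1 \<Longrightarrow> B $$ (i,n-1) = 0" using that P'char by auto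
    have Bc: "B \<in> carrier_mat n n" using Pc[OF B(1)] .
    show ?thesis unfolding g_def
    proof (rule eq_vecI)
      fix i assume "i < dim_vec (unit_vec n (n-1))"
      hence i: "i < n" by simp
      show "col B (n-1) $ i = unit_vec n (n-1) $ i"
      proof (cases "i = n - 1")
        case True thus ?thesis using diag[OF B(1)] Bc i by simp
      next
        case False thus ?thesis using B(2)[of i] Bc i n2 by simp
      qed
    qed (use Bc in simp)
  qed
  have coset: "(\<lambda>B. A * B) ` P' = {C \<in> P. g C = g A}" if A: "A \<in> P" for A
  proof (intro equalityI subsetI)
    fix C assume "C \<in> (\<lambda>B. A * B) ` P'"
    then obtain B where B: "B \<in> P'" "C = A * B" by auto
    have "B \<in> P" using B(1) sub by auto
    hence "C \<in> P" using PP_mult[of A n lam mu B] A B(2) unfolding P_def by simp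
    moreover have "g C = g A"
    proof -
      have "g C = A *\<^sub>v col B (n-1)" unfolding g_def B(2)
        using Pc[OF A] Pc[OF \<open>B \<in> P\<close>] n2 by (intro col_mult2) auto
      also have "\<dots> = A *\<^sub>v unit_vec n (n-1)" using gP'[OF B(1)] unfolding g_def by simp
      also have "\<dots> = g A" unfolding g_def using mult_unit_vec[OF Pc[OF A]] n2 by simp
      finally show ?thesis .
    qed
    ultimately show "C \<in> {C \<in> P. g C = g A}" by simp
  next
    fix C assume "C \<in> {C \<in> P. g C = g A}"
    hence C: "C \<in> P" "g C = g A" by auto
    obtain Ai where Ai: "Ai \<in> P" "A * Ai = 1\<^sub>m n" "Ai * A = 1\<^sub>m n"
      using PP_inv[of A n lam mu] A unfolding P_def by auto
    define B where "B = Ai * C"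
    have BP: "B \<in> P" using PP_mult[of Ai n lam mu C] Ai(1) C(1) unfolding B_def P_def by simp
    have "A * B = (A * Ai) * C" unfolding B_def
      using Pc[OF A] Pc[OF Ai(1)] Pc[OF C(1)] by (simp add: assoc_mult_mat[of _ n n _ n _ n])
    hence AB: "A * B = C" using Ai(2) Pc[OF C(1)] by simp
    have "g B = Ai *\<^sub>v col C (n-1)" unfolding g_def B_def
      using Pc[OF Ai(1)] Pc[OF C(1)] n2 by (intro col_mult2) auto
    also have "\<dots> = Ai *\<^sub>v col A (n-1)" using C(2) unfolding g_def by simp
    also have "\<dots> = col (Ai * A) (n-1)"
      using Pc[OF Ai(1)] Pc[OF A] n2 by (intro col_mult2[symmetric]) auto
    also have "\<dots> = unit_vec n (n-1)" using Ai(3) n2 by simp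
    finally have gB: "g B = unit_vec n (n-1)" .
    have "\<forall>i<n-1. B $$ (i,n-1) = 0"
    proof (intro allI impI)
      fix i assume i: "i < n - 1"
      have "B $$ (i,n-1) = g B $ i" unfolding g_def using Pc[OF BP] i n2 by simp
      thus "B $$ (i,n-1) = 0" using gB i by simp
    qed
    hence "B \<in> P'" using P'char BP by simp
    thus "C \<in> (\<lambda>B. A * B) ` P'" using AB by auto
  qed
  define V where "V = {v \<in> carrier_vec n. v $ (n-1) = (1::bit) \<and> (\<forall>i<n-a. v $ i = 0)}"
  have gimg: "g ` P = V"
  proof (intro equalityI subsetI)
    fix v assume "v \<in> g ` P"
    then obtain A where A: "A \<in> P" "v = g A" by auto
    have A4: "\<And>i j. i<n \<Longrightarrow> j<n \<Longrightarrow> blk mu i < blk mu j \<Longrightarrow> A $$ (i,j) = 0"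
      using A(1) unfolding P_def PP_def by auto
    have "v \<in> carrier_vec n" unfolding A(2) g_def using col_dim[of A "n-1"] Pc[OF A(1)] by auto
    moreover have "v $ (n-1) = 1" unfolding A(2) g_def using Pc[OF A(1)] n2 diag[OF A(1)] by simp
    moreover have "v $ i = 0" if "i < n - a" for i
    proof -
      have i: "i < n" using that by simp
      have "A $$ (i,n-1) = 0" using A4[OF i, of "n-1"] bm_iff[OF i] that n2 by simp
      thus ?thesis unfolding A(2) g_def using Pc[OF A(1)] n2 i by simp
    qed
    ultimately show "v \<in> V" unfolding V_def by simp
  next
    fix v assume "v \<in> V"
    hence v: "v \<in> carrier_vec n" "v $ (n-1) = 1" "\<And>i. i < n - a \<Longrightarrow> v $ i = 0"
      unfolding V_def by auto
    define U where "U = mat n n (\<lambda>(i,j). if j = n-1 then v $ i else if i = j then 1 else (0::bit))"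
    have Uc: "U \<in> carrier_mat n n" unfolding U_def by simp
    have Ue: "U $$ (i,j) = (if j = n-1 then v $ i else if i = j then 1 else 0)" if "i < n" "j < n" for i j
      unfolding U_def using that by simp
    have UU: "U * U = 1\<^sub>m n"
    proof (rule eq_matI)
      fix i j assume "i < dim_row (1\<^sub>m n :: bit mat)" "j < dim_col (1\<^sub>m n :: bit mat)"
      hence i: "i < n" and j: "j < n" by auto
      have e: "(U * U) $$ (i,j) = (\<Sum>k\<in>{0..<n}. U $$ (i,k) * U $$ (k,j))"
        using mult_entry[OF Uc Uc i j] .
      show "(U * U) $$ (i,j) = 1\<^sub>m n $$ (i,j)"
      proof (cases "j = n - 1")
        case False
        have "(\<Sum>k\<in>{0..<n}. U $$ (i,k) * U $$ (k,j)) = (\<Sum>k\<in>{0..<n}. if k = j then U $$ (i,j) else 0)"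
          by (rule sum.cong) (use False Ue j in auto)
        also have "\<dots> = U $$ (i,j)" using j by simp
        finally show ?thesis using e Ue[OF i j] False i j by simp
      next
        case jT: True
        show ?thesis
        proof (cases "i = n - 1")
          case True
          have "(\<Sum>k\<in>{0..<n}. U $$ (i,k) * U $$ (k,j)) = (\<Sum>k\<in>{0..<n}. if k = n-1 then (1::bit) else 0)"
            by (rule sum.cong) (use True jT Ue v(2) in auto)
          also have "\<dots> = 1" using n2 by simp
          finally show ?thesis using e True jT i by simp
        next
          case False
          have "(\<Sum>k\<in>{0..<n}. U $$ (i,k) * U $$ (k,j))
              = (\<Sum>k\<in>{0..<n}. (if k = n-1 then v $ i else 0) + (if k = i then v $ i else 0))"
            by (rule sum.cong) (use False jT Ue v(2) i in auto)
          also have "\<dots> = (\<Sum>k\<in>{0..<n}. if k = n-1 then v $ i else 0) + (\<Sum>k\<in>{0..<n}. if k = i then v $ i else 0)"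
            by (rule sum.distrib)
          also have "\<dots> = v $ i + v $ i" using n2 i by (simp only: sum.delta finite_atLeastLessThan) simp
          also have "\<dots> = 0" by (rule bit_add_self)
          finally show ?thesis using e False jT i j by simp
        qed
      qed
    qed (use Uc in auto)
    have UP: "U \<in> P"
    proof -
      have "invertible_mat U" using invertibleI[OF Uc Uc UU UU] .
      moreover have "U $$ (i,j) = 0" if "i<n" "j<n" "blk lam j < blk lam i" for i j
      proof (cases "j = n - 1")
        case True thus ?thesis using bl_le[OF that(1)] bl_last that by simp
      next
        case False thus ?thesis using Ue[OF that(1,2)] that by auto
      qed
      moreover have "U $$ (i,j) = 0" if "i<n" "j<n" "blk mu i < blk mu j" for i j
      proof (cases "j = n - 1")
        case True thus ?thesis using Ue[OF that(1,2)] bm_iff[OF that(1)] v(3)[of i] that by simp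
      next
        case False thus ?thesis using Ue[OF that(1,2)] that by auto
      qed
      ultimately show ?thesis unfolding P_def PP_def using Uc by auto
    qed
    have "g U = v" unfolding g_def
    proof (rule eq_vecI)
      fix i assume "i < dim_vec v"
      hence i: "i < n" using v(1) by simp
      show "col U (n-1) $ i = v $ i" using Uc i n2 Ue[OF i, of "n-1"] by simp
    qed (use Uc v(1) in simp)
    thus "v \<in> g ` P" using UP by blast
  qed
  define S where "S = {n-a..<n-1}"
  define h where "h f = vec n (\<lambda>i. if i = n-1 then 1 else if n-a \<le> i then f i else (0::bit))" for f
  have Vh: "V = h ` (S \<rightarrow>\<^sub>E UNIV)"
  proof (intro equalityI subsetI)
    fix v assume "v \<in> V"
    hence v: "v \<in> carrier_vec n" "v $ (n-1) = 1" "\<And>i. i < n - a \<Longrightarrow> v $ i = 0"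
      unfolding V_def by auto
    have "v = h (restrict (\<lambda>i. v $ i) S)" unfolding h_def
    proof (rule eq_vecI)
      fix i assume "i < dim_vec (vec n (\<lambda>i. if i = n-1 then 1 else if n-a \<le> i then restrict (\<lambda>i. v $ i) S i else (0::bit)))"
      hence i: "i < n" by simp
      show "v $ i = vec n (\<lambda>i. if i = n-1 then 1 else if n-a \<le> i then restrict (\<lambda>i. v $ i) S i else (0::bit)) $ i"
        using i v(2) v(3)[of i] unfolding S_def by auto
    qed (use v(1) in simp)
    moreover have "restrict (\<lambda>i. v $ i) S \<in> S \<rightarrow>\<^sub>E UNIV" by simp
    ultimately show "v \<in> h ` (S \<rightarrow>\<^sub>E UNIV)" by blast
  next
    fix v assume "v \<in> h ` (S \<rightarrow>\<^sub>E UNIV)"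
    then obtain f where v: "v = h f" by auto
    show "v \<in> V" unfolding V_def v h_def using n2 a2 by auto
  qed
  have hinj: "inj_on h (S \<rightarrow>\<^sub>E UNIV)"
  proof (rule inj_onI)
    fix f f' assume f: "f \<in> S \<rightarrow>\<^sub>E UNIV" and f': "f' \<in> S \<rightarrow>\<^sub>E UNIV" and e: "h f = h f'"
    show "f = f'"
    proof (rule PiE_ext[OF f f'])
      fix i assume "i \<in> S"
      hence i: "i < n" "i \<noteq> n - 1" "n - a \<le> i" unfolding S_def by auto
      have "h f $ i = f i" "h f' $ i = f' i" unfolding h_def using i by auto
      thus "f i = f' i" using e by simp
    qed
  qed
  have cardV: "card V = 2 ^ (a - 1)"
  proof -
    have "card V = card (S \<rightarrow>\<^sub>E (UNIV :: bit set))" unfolding Vh using hinj by (rule card_image)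
    also have "\<dots> = (\<Prod>i\<in>S. card (UNIV :: bit set))" unfolding S_def by (rule card_PiE) simp
    also have "\<dots> = 2 ^ card S" by (simp add: card_bit)
    also have "card S = a - 1" unfolding S_def using an a2 by simp
    finally show ?thesis .
  qed
  have "(\<lambda>A. (\<lambda>B. A * B) ` P') ` P = (\<lambda>A. {C \<in> P. g C = g A}) ` P"
    by (rule image_cong) (simp_all add: coset)
  also have "\<dots> = (\<lambda>v. {C \<in> P. g C = v}) ` (g ` P)" by (simp add: image_image)
  finally have ce: "(\<lambda>A. (\<lambda>B. A * B) ` P') ` P = (\<lambda>v. {C \<in> P. g C = v}) ` (g ` P)" .
  have inj: "inj_on (\<lambda>v. {C \<in> P. g C = v}) (g ` P)"
  proof (rule inj_onI)
    fix v w assume "v \<in> g ` P" "w \<in> g ` P" and e: "{C \<in> P. g C = v} = {C \<in> P. g C = w}"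
    then obtain A where A: "A \<in> P" "v = g A" by auto
    hence "A \<in> {C \<in> P. g C = v}" by simp
    hence "A \<in> {C \<in> P. g C = w}" using e by simp
    thus "v = w" using A by simp
  qed
  have "subgroup_index P P' = card (g ` P)"
    unfolding subgroup_index_def ce using inj by (rule card_image)
  hence idx: "subgroup_index P P' = 2 ^ (a - 1)" using gimg cardV by simp
  show ?thesis using sub idx PIa PIb unfolding mu'_def a_def by simp
qed

end
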